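(* Let $h$ be the two-dimensional Euclid's hat. Define the minimal specific energy $$e(h)=\inf_{n\ge2}\ \inf_{(\zeta_1,\dots,\zeta_n)}\frac{1}{n}U_n(\zeta_1,\dots,\zeta_n;h)$$ and the constrained (modified) minimal specific energy $$\bar e(h)=\inf_{n\ge2}\ \inf_{\substack{(\zeta_1,\dots,\zeta_n)\\ \sigma_1+\dots+\sigma_n\neq0}}\frac{1}{n-1}U_n(\zeta_1,\dots,\zeta_n;h),$$ the inner infima running over all $\zeta_j=(\sigma_j,x_j)\in\{-1,1\}\times\mathbb{R}^2$. Then $e(h)=\bar e(h)=-1/2$. The value $-1/2$ is attained for $e$ by any configuration with $n$ even, $\sum_j\sigma_j=0$ and all $x_j$ equal, and for $\bar e$ by any configuration with $n$ odd, $|\sum_j\sigma_j|=1$ and all $x_j$ equal.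
   Context: The Euclid's hat is $h:[0,\infty)\to[0,1]$, $h(w)=\frac{2}{\pi}(\arccos w-w\sqrt{1-w^2})$ for $0\le w\le1$ and $h(w)=0$ for $w>1$. For $\zeta_j=(\sigma_j,x_j)\in\{-1,1\}\times\mathbb{R}^2$, $U_n(\zeta_1,\dots,\zeta_n;h)=\sum_{1\le i<j\le n}\sigma_i\sigma_j h(|x_i-x_j|)$. *)

theory Defs
  imports "HOL-Analysis.Analysis"
begin

text \<open>Two-dimensional Euclid's hat (arguments are distances, hence nonnegative).\<close>
definition euclid_hat :: "real \<Rightarrow> real" where
  "euclid_hat w = (if w \<le> 1 then 2 / pi * (arccos w - w * sqrt (1 - w\<^sup>2)) else 0)"

text \<open>A configuration of n charged points: charges sigma j and positions x j, for j < n.\<close>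
definition spins_ok :: "nat \<Rightarrow> (nat \<Rightarrow> int) \<Rightarrow> bool" where
  "spins_ok n \<sigma> \<longleftrightarrow> (\<forall>j<n. \<sigma> j \<in> {-1, 1})"

definition U_energy :: "(real \<Rightarrow> real) \<Rightarrow> nat \<Rightarrow> (nat \<Rightarrow> int) \<Rightarrow> (nat \<Rightarrow> real^2) \<Rightarrow> real" where
  "U_energy h n \<sigma> x =
     (\<Sum>(i, j) \<in> {(i, j). i < j \<and> j < n}. real_of_int (\<sigma> i * \<sigma> j) * h (dist (x i) (x j)))"

definition min_spec_energy :: "(real \<Rightarrow> real) \<Rightarrow> real" where
  "min_spec_energy h = Inf {U_energy h n \<sigma> x / real n | n \<sigma> x. n \<ge> 2 \<and> spins_ok n \<sigma>}"

definition mod_min_spec_energy :: "(real \<Rightarrow> real) \<Rightarrow> real" where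
  "mod_min_spec_energy h = Inf {U_energy h n \<sigma> x / (real n - 1) | n \<sigma> x.
       n \<ge> 2 \<and> spins_ok n \<sigma> \<and> (\<Sum>j<n. \<sigma> j) \<noteq> 0}"

end

theory Submission
  imports Defs
begin

definition phi :: "real \<times> real \<Rightarrow> real^2" where "phi p = vector [fst p, snd p]"

lemma phi_eq: "phi p = (\<chi> i. if i = 1 then fst p else snd p)"
  unfolding phi_def by (auto simp: vec_eq_iff forall_2)

lemma phi_meas[measurable]: "phi \<in> borel_measurable borel"
  unfolding phi_eq
  apply (intro borel_measurable_continuous_onI continuous_intros continuous_on_vec_lambda)
  subgoal for i by (cases "i = 1") (auto intro: continuous_intros)
  done

lemma Basis_2: "(Basis::(real^2) set) = {axis 1 1, axis 2 1}"
  by (auto simp: Basis_vec_def UNIV_2)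

lemma prod_Basis_2: "(\<Prod>b\<in>(Basis::(real^2) set). f b) = f (axis 1 1) * f (axis 2 1)"
  unfolding Basis_2 by (subst prod.insert) (auto simp: axis_eq_axis)

lemma lborel_2: "(lborel :: (real^2) measure) = distr (lborel::(real\<times>real) measure) borel phi"
proof (rule lborel_eqI)
  fix l u :: "real^2"
  assume "\<And>b. b \<in> Basis \<Longrightarrow> l \<bullet> b \<le> u \<bullet> b"
  from this[of "axis 1 1"] this[of "axis 2 1"] have le: "l$1 \<le> u$1" "l$2 \<le> u$2"
    by (auto simp: inner_axis)
  have pre: "phi -` box l u = box (l$1, l$2) (u$1, u$2)"
    by (auto simp: phi_def mem_box Basis_2 inner_axis Basis_prod_def inner_Pair)
  have "emeasure (distr lborel borel phi) (box l u) = emeasure (lborel::(real\<times>real) measure) (box (l$1, l$2) (u$1, u$2))"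
    by (subst emeasure_distr) (auto simp: pre)
  also have "box (l$1, l$2) (u$1, u$2) = box (l$1) (u$1) \<times> box (l$2) (u$2)"
    by (auto simp: box_def Basis_prod_def inner_Pair)
  also have "emeasure (lborel::(real\<times>real) measure) \<dots> = (u$1 - l$1) * (u$2 - l$2)"
    unfolding lborel_prod[symmetric] using le
    by (subst lborel.emeasure_pair_measure_Times) (auto simp: ennreal_mult)
  also have "\<dots> = (\<Prod>b\<in>Basis. (u - l) \<bullet> b)"
    by (simp add: prod_Basis_2 inner_axis)
  finally show "emeasure (distr lborel borel phi) (box l u) = (\<Prod>b\<in>Basis. (u - l) \<bullet> b)" .
qed simp
lemma int1:
  fixes d :: real
  assumes d: "0 \<le> d" "d \<le> 1"
  defines "w \<equiv> sqrt (1 - d\<^sup>2) / 2"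
  shows "((\<lambda>a. sqrt (1 - 4 * a\<^sup>2) - d) has_integral (1/2) * (arccos d - d * sqrt (1 - d\<^sup>2))) {-w..w}"
proof -
  define F where "F a = (2 * a * sqrt (1 - 4 * a\<^sup>2) + arcsin (2 * a)) / 4" for a :: real
  have w0: "0 \<le> w" unfolding w_def using d by (simp add: abs_square_le_1)
  have w1: "2 * w \<le> 1" unfolding w_def using d by (simp add: real_sqrt_le_1_iff)
  have cont: "continuous_on {-w..w} F"
  proof -
    have "continuous_on {-w..w} (\<lambda>a. arcsin (2 * a))"
    proof (rule continuous_on_compose2[of "{-1..1}" arcsin])
      show "continuous_on {-1..1} arcsin" by (rule continuous_on_arcsin') 
    qed (use w1 in \<open>auto intro!: continuous_intros\<close>)
    then show ?thesis unfolding F_def by (intro continuous_intros) (use w1 in auto)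
  qed
  have der: "(F has_vector_derivative sqrt (1 - 4 * a\<^sup>2)) (at a)" if a: "a \<in> {-w<..<w}" for a
  proof -
    have a1: "-1 < 2 * a" "2 * a < 1" using a w1 by auto
    have pos: "0 < 1 - 4 * a\<^sup>2"
    proof -
      have "0 < (1 - 2*a) * (1 + 2*a)" using a1 by (intro mult_pos_pos) auto
      then show ?thesis by (simp add: power2_eq_square algebra_simps)
    qed
    have "(F has_real_derivative
            (2 * sqrt (1 - 4 * a\<^sup>2) + 2 * a * (inverse (sqrt (1 - 4 * a\<^sup>2)) / 2 * (- (4 * (2 * a)))) 
             + inverse (sqrt (1 - (2*a)\<^sup>2)) * 2) / 4) (at a)"
      unfolding F_def using a1 pos
      by (auto intro!: derivative_eq_intros simp: power_mult_distrib)
    moreover have "(2 * sqrt (1 - 4 * a\<^sup>2) + 2 * a * (inverse (sqrt (1 - 4 * a\<^sup>2)) / 2 * (- (4 * (2 * a)))) 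
             + inverse (sqrt (1 - (2*a)\<^sup>2)) * 2) / 4 = sqrt (1 - 4 * a\<^sup>2)"
    proof -
      have s: "sqrt (1 - 4 * a\<^sup>2) > 0" using pos by simp
      have "(sqrt (1 - 4 * a\<^sup>2))\<^sup>2 = 1 - 4 * a\<^sup>2" using pos by simp
      then show ?thesis using s by (simp add: power_mult_distrib field_simps power2_eq_square)
    qed
    ultimately have "(F has_real_derivative sqrt (1 - 4 * a\<^sup>2)) (at a)" by metis
    then show ?thesis by (simp add: has_real_derivative_iff_has_vector_derivative)
  qed
  have "((\<lambda>a. sqrt (1 - 4 * a\<^sup>2)) has_integral (F w - F (-w))) {-w..w}"
    using w0 cont der by (intro fundamental_theorem_of_calculus_interior) auto
  from has_integral_diff[OF this has_integral_const_real[of d "-w" w]]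
  have I: "((\<lambda>a. sqrt (1 - 4 * a\<^sup>2) - d) has_integral (F w - F (-w) - d * (w - - w))) {-w..w}"
    using w0 by (simp add: mult.commute)
  have sq: "sqrt (1 - 4 * w\<^sup>2) = d"
  proof -
    have "4 * w\<^sup>2 = 1 - d\<^sup>2" unfolding w_def using d by (simp add: power_divide abs_square_le_1)
    then show ?thesis using d by simp
  qed
  have as: "arcsin (2 * w) = arccos d"
    unfolding w_def using d by (simp add: arccos_arcsin_sqrt_pos)
  have Fm: "F (-w) = - F w" unfolding F_def using w0 w1 by (simp add: arcsin_minus field_simps)
  have Fw: "F w = (2 * w * d + arccos d) / 4" unfolding F_def using sq as by simp
  have w2: "2 * w = sqrt (1 - d\<^sup>2)" unfolding w_def by simp
  have "F w - F (-w) - d * (w - - w) = (1/2) * (arccos d - d * (2 * w))"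
    unfolding Fm Fw by (simp add: field_simps)
  also have "\<dots> = (1/2) * (arccos d - d * sqrt (1 - d\<^sup>2))" using w2 by simp
  finally have "F w - F (-w) - d * (w - - w) = (1/2) * (arccos d - d * sqrt (1 - d\<^sup>2))" .
  with I show ?thesis by (metis minus_minus diff_minus_eq_add)
qed
lemma sq_less_iff: "0 < (s::real) \<Longrightarrow> b\<^sup>2 < s\<^sup>2 \<longleftrightarrow> -s < b \<and> b < s"
  using abs_le_square_iff[of s b] by (auto simp: not_le[symmetric] abs_less_iff)
lemma sq_le_iff: "0 \<le> (s::real) \<Longrightarrow> b\<^sup>2 \<le> s\<^sup>2 \<longleftrightarrow> -s \<le> b \<and> b \<le> s"
  using power2_le_iff_abs_le[of s b] by (auto simp: abs_le_iff)
lemma sqrt_less_half: "sqrt x < 1/2 \<longleftrightarrow> x < 1/4"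
proof -
  have "(1/2::real) = sqrt (1/4)" by (simp add: real_sqrt_divide)
  then show ?thesis by (simp only: real_sqrt_less_iff)
qed
lemma norm2: "norm (v::real^2) = sqrt ((v$1)\<^sup>2 + (v$2)\<^sup>2)"
  by (simp add: norm_vec_def L2_set_def sum_2)
lemma dist2: "dist (v::real^2) u = sqrt ((v$1-u$1)\<^sup>2 + (v$2-u$2)\<^sup>2)"
  by (simp add: dist_norm norm2)


lemma slice_meas:
  fixes a d :: real assumes d: "0 \<le> d"
  shows "emeasure lborel {b. a\<^sup>2 + b\<^sup>2 < 1/4 \<and> a\<^sup>2 + (b - d)\<^sup>2 < 1/4}
         = ennreal (max 0 (sqrt (1 - 4 * a\<^sup>2) - d))"
proof (cases "a\<^sup>2 < 1/4")
  case False
  have "\<not> (a\<^sup>2 + b\<^sup>2 < 1/4)" for b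
  proof -
    have "0 \<le> b\<^sup>2" by simp
    then show ?thesis using False by linarith
  qed
  then have E: "{b. a\<^sup>2 + b\<^sup>2 < 1/4 \<and> a\<^sup>2 + (b - d)\<^sup>2 < 1/4} = {}" by blast
  have "sqrt (1 - 4 * a\<^sup>2) \<le> 0" using False by simp
  then have "max 0 (sqrt (1 - 4 * a\<^sup>2) - d) = 0" using d by (intro max_absorb1) linarith
  then show ?thesis unfolding E by simp
next
  case True
  define s where "s = sqrt (1/4 - a\<^sup>2)"
  have s0: "0 < s" unfolding s_def using True by simp
  have ss: "s\<^sup>2 = 1/4 - a\<^sup>2" unfolding s_def using True by simp
  have s2: "sqrt (1 - 4 * a\<^sup>2) = 2 * s"
  proof -
    have "sqrt (1 - 4 * a\<^sup>2) = sqrt (4 * (1/4 - a\<^sup>2))" by (simp add: algebra_simps)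
    also have "\<dots> = sqrt 4 * sqrt (1/4 - a\<^sup>2)" by (rule real_sqrt_mult)
    also have "sqrt 4 = (2::real)" using real_sqrt_abs[of "2::real"] by simp
    finally show ?thesis unfolding s_def .
  qed
  have set: "{b. a\<^sup>2 + b\<^sup>2 < 1/4 \<and> a\<^sup>2 + (b - d)\<^sup>2 < 1/4} = {d - s <..< s}"
  proof (intro set_eqI)
    fix b :: real
    have "(a\<^sup>2 + b\<^sup>2 < 1/4) = (b\<^sup>2 < s\<^sup>2)" using ss by linarith
    also have "\<dots> = (-s < b \<and> b < s)" by (rule sq_less_iff[OF s0])
    finally have 1: "(a\<^sup>2 + b\<^sup>2 < 1/4) = (-s < b \<and> b < s)" .
    have "(a\<^sup>2 + (b-d)\<^sup>2 < 1/4) = ((b-d)\<^sup>2 < s\<^sup>2)" using ss by linarith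
    also have "\<dots> = (-s < b-d \<and> b-d < s)" by (rule sq_less_iff[OF s0])
    finally have 2: "(a\<^sup>2 + (b-d)\<^sup>2 < 1/4) = (-s < b-d \<and> b-d < s)" .
    show "b \<in> {b. a\<^sup>2 + b\<^sup>2 < 1/4 \<and> a\<^sup>2 + (b - d)\<^sup>2 < 1/4} \<longleftrightarrow> b \<in> {d - s <..< s}"
      unfolding mem_Collect_eq 1 2 greaterThanLessThan_iff using d s0 by auto
  qed
  show ?thesis
  proof (cases "d - s \<le> s")
    case True
    then show ?thesis unfolding set s2 by simp
  next
    case False
    then show ?thesis unfolding set s2 by simp
  qed
qed

lemma lens_axis:
  fixes d :: real assumes d: "0 \<le> d" "d \<le> 1"
  shows "emeasure lborel (ball (0::real^2) (1/2) \<inter> ball (vector [0, d]) (1/2))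
         = ennreal ((1/2) * (arccos d - d * sqrt (1 - d\<^sup>2)))"
proof -
  define L where "L = ball (0::real^2) (1/2) \<inter> ball (vector [0, d]) (1/2)"
  define L' where "L' = {p::real\<times>real. (fst p)\<^sup>2 + (snd p)\<^sup>2 < 1/4 \<and> (fst p)\<^sup>2 + (snd p - d)\<^sup>2 < 1/4}"
  define w where "w = sqrt (1 - d\<^sup>2) / 2"
  have pre: "phi -` L = L'"
  proof (intro set_eqI)
    fix x :: "real \<times> real"
    obtain a b where x: "x = (a, b)" by (cases x)
    have e1: "dist 0 (phi (a,b)) = sqrt (a\<^sup>2 + b\<^sup>2)" by (simp add: phi_def dist2)
    have e2: "dist (vector[0,d]) (phi (a,b)) = sqrt (a\<^sup>2 + (b - d)\<^sup>2)"
      by (simp add: phi_def dist2 power2_commute)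
    show "x \<in> phi -` L \<longleftrightarrow> x \<in> L'"
      unfolding x L_def L'_def vimage_def mem_Collect_eq Int_iff mem_ball e1 e2 sqrt_less_half fst_conv snd_conv
      by (rule refl)
  qed
  have Lb: "L \<in> sets borel" unfolding L_def by auto
  have L'b: "L' \<in> sets (lborel \<Otimes>\<^sub>M lborel)"
  proof -
    have "phi -` L \<inter> space borel \<in> sets borel" using measurable_sets[OF phi_meas Lb] .
    then show ?thesis unfolding lborel_prod by (simp add: pre)
  qed
  have "emeasure lborel L = emeasure (distr (lborel::(real\<times>real) measure) borel phi) L"
    by (simp add: lborel_2[symmetric])
  also have "\<dots> = emeasure lborel L'"
    using Lb by (subst emeasure_distr) (auto simp: pre)
  also have "\<dots> = emeasure (lborel \<Otimes>\<^sub>M lborel) L'" by (simp add: lborel_prod)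
  also have "\<dots> = (\<integral>\<^sup>+a. emeasure lborel (Pair a -` L') \<partial>lborel)"
    using L'b by (rule lborel.emeasure_pair_measure_alt)
  also have "\<dots> = (\<integral>\<^sup>+a. ennreal (max 0 (sqrt (1 - 4 * a\<^sup>2) - d)) \<partial>lborel)"
    using slice_meas[OF d(1)] by (simp add: L'_def vimage_def)
  also have "\<dots> = (\<integral>\<^sup>+a. ennreal (indicator {-w..w} a * (sqrt (1 - 4 * a\<^sup>2) - d)) \<partial>lborel)"
  proof (intro nn_integral_cong)
    fix a :: real
    have w0: "0 \<le> w" unfolding w_def using d by (simp add: abs_square_le_1)
    have w2: "4 * w\<^sup>2 = 1 - d\<^sup>2" unfolding w_def using d by (simp add: power_divide abs_square_le_1)
    show "ennreal (max 0 (sqrt (1 - 4 * a\<^sup>2) - d)) = ennreal (indicator {-w..w} a * (sqrt (1 - 4 * a\<^sup>2) - d))"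
    proof (cases "a \<in> {-w..w}")
      case True
      then have "a\<^sup>2 \<le> w\<^sup>2" using w0 by (simp add: sq_le_iff)
      then have "d\<^sup>2 \<le> 1 - 4 * a\<^sup>2" using w2 by linarith
      then have "sqrt (d\<^sup>2) \<le> sqrt (1 - 4 * a\<^sup>2)" by (rule real_sqrt_le_mono)
      then show ?thesis using True d by simp
    next
      case False
      then have "\<not> a\<^sup>2 \<le> w\<^sup>2" using w0 by (simp add: sq_le_iff)
      then have "1 - 4 * a\<^sup>2 < d\<^sup>2" using w2 by linarith
      then have "sqrt (1 - 4 * a\<^sup>2) < sqrt (d\<^sup>2)" by (rule real_sqrt_less_mono)
      then show ?thesis using False d by simp
    qed
  qed
  also have "\<dots> = ennreal ((1/2) * (arccos d - d * sqrt (1 - d\<^sup>2)))"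
  proof (rule nn_integral_has_integral_lebesgue)
    fix a assume a: "a \<in> {-w..w}"
    have w0: "0 \<le> w" unfolding w_def using d by (simp add: abs_square_le_1)
    have w2: "4 * w\<^sup>2 = 1 - d\<^sup>2" unfolding w_def using d by (simp add: power_divide abs_square_le_1)
    have "a\<^sup>2 \<le> w\<^sup>2" using a w0 by (simp add: sq_le_iff)
    then have "d\<^sup>2 \<le> 1 - 4 * a\<^sup>2" using w2 by linarith
    then have "sqrt (d\<^sup>2) \<le> sqrt (1 - 4 * a\<^sup>2)" by (rule real_sqrt_le_mono)
    then show "0 \<le> sqrt (1 - 4 * a\<^sup>2) - d" using d by simp
  next
    show "((\<lambda>a. sqrt (1 - 4 * a\<^sup>2) - d) has_integral (1/2) * (arccos d - d * sqrt (1 - d\<^sup>2))) {-w..w}"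
      unfolding w_def by (rule int1[OF d])
  qed
  finally show ?thesis unfolding L_def .
qed


lemma norm_vec02: "norm (vector [0, d] :: real^2) = \<bar>d\<bar>"
  by (simp add: norm2)

lemma lens_general:
  fixes x y :: "real^2"
  shows "measure lebesgue (ball x (1/2) \<inter> ball y (1/2)) = pi / 4 * euclid_hat (dist x y)"
proof -
  define z where "z = y - x"
  define d where "d = dist x y"
  have d0: "0 \<le> d" unfolding d_def by simp
  have nz: "norm z = d" unfolding z_def d_def by (simp add: dist_norm norm_minus_commute)
  have "ball x (1/2) \<inter> ball y (1/2) = (+) x ` (ball 0 (1/2) \<inter> ball z (1/2))"
    by (simp add: image_Int z_def)
  then have "measure lebesgue (ball x (1/2) \<inter> ball y (1/2)) = measure lebesgue (ball 0 (1/2) \<inter> ball z (1/2))"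
    by (simp add: measure_translation)
  also have "\<dots> = pi / 4 * euclid_hat d"
  proof (cases "d \<le> 1")
    case False
    have "ball 0 (1/2) \<inter> ball z (1/2) = {}"
    proof (rule ccontr)
      assume "ball 0 (1/2) \<inter> ball z (1/2) \<noteq> {}"
      then obtain p where "dist 0 p < 1/2" "dist z p < 1/2" by auto
      then have "dist 0 z < 1" using dist_triangle_half_l by (smt (verit, best) dist_commute dist_triangle)
      then show False using False nz by simp
    qed
    then show ?thesis using False by (simp add: euclid_hat_def)
  next
    case True
    have eqn: "norm (vector [0, d] :: real^2) = norm z" using nz d0 norm_vec02 by simp
    obtain f where f: "orthogonal_transformation f" "f (vector [0, d] :: real^2) = z"
      using orthogonal_transformation_exists[OF eqn] by metis
    have f0: "f 0 = 0" using f(1) by (simp add: orthogonal_transformation_linear linear_0)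
    have img: "f ` (ball 0 (1/2) \<inter> ball (vector [0, d]) (1/2)) = ball 0 (1/2) \<inter> ball z (1/2)"
      using f f0 by (simp add: image_Int orthogonal_transformation_inj image_orthogonal_transformation_ball)
    have "measure lebesgue (ball 0 (1/2) \<inter> ball z (1/2)) = measure lebesgue (ball (0::real^2) (1/2) \<inter> ball (vector [0, d]) (1/2))"
      unfolding img[symmetric] using f(1) by (intro measure_orthogonal_image) auto
    also have "\<dots> = measure lborel (ball (0::real^2) (1/2) \<inter> ball (vector [0, d]) (1/2))"
      by (intro measure_completion) auto
    also have "\<dots> = (1/2) * (arccos d - d * sqrt (1 - d\<^sup>2))"
    proof -
      have "(1/2) * (arccos d - d * sqrt (1 - d\<^sup>2)) \<ge> 0"
      proof (rule has_integral_nonneg[OF int1[OF d0 True]])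
        fix a assume a: "a \<in> {-(sqrt (1 - d\<^sup>2) / 2)..sqrt (1 - d\<^sup>2) / 2}"
        define w where "w = sqrt (1 - d\<^sup>2) / 2"
        have w0: "0 \<le> w" unfolding w_def using d0 True by (simp add: abs_square_le_1)
        have w2: "4 * w\<^sup>2 = 1 - d\<^sup>2" unfolding w_def using d0 True by (simp add: power_divide abs_square_le_1)
        have "a\<^sup>2 \<le> w\<^sup>2" using a w0 by (simp add: sq_le_iff w_def)
        then have "d\<^sup>2 \<le> 1 - 4 * a\<^sup>2" using w2 by linarith
        then have "sqrt (d\<^sup>2) \<le> sqrt (1 - 4 * a\<^sup>2)" by (rule real_sqrt_le_mono)
        then show "0 \<le> sqrt (1 - 4 * a\<^sup>2) - d" using d0 by simp
      qed
      then show ?thesis using lens_axis[OF d0 True] by (simp add: measure_def)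
    qed
    also have "\<dots> = pi / 4 * euclid_hat d" using True by (simp add: euclid_hat_def)
    finally show ?thesis .
  qed
  finally show ?thesis unfolding d_def .
qed


lemma int_abs_le_sq: "\<bar>k::int\<bar> \<le> k * k"
proof (cases "k = 0")
  case False
  then have "1 \<le> \<bar>k\<bar>" by simp
  then have "\<bar>k\<bar> * 1 \<le> \<bar>k\<bar> * \<bar>k\<bar>" by (intro mult_left_mono) auto
  then show ?thesis by (simp add: abs_mult[symmetric])
qed simp

lemma pd:
  fixes x :: "nat \<Rightarrow> real^2" and \<sigma> :: "nat \<Rightarrow> int"
  shows "\<bar>real_of_int (\<Sum>j<n. \<sigma> j)\<bar> \<le> (\<Sum>i<n. \<Sum>j<n. real_of_int (\<sigma> i * \<sigma> j) * euclid_hat (dist (x i) (x j)))"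
proof -
  define B where "B i = ball (x i) (1/2)" for i
  define f where "f t = (\<Sum>i<n. real_of_int (\<sigma> i) * indicator (B i) t)" for t :: "real^2"
  have Bs: "B i \<inter> B j \<in> sets lborel" for i j by (simp add: B_def)
  have Bf: "emeasure lborel (B i \<inter> B j) < \<infinity>" for i j
    by (intro emeasure_bounded_finite) (simp add: B_def bounded_Int)
  have ii: "(\<lambda>t. indicator (B i) t * indicator (B j) t :: real) = indicator (B i \<inter> B j)" for i j
    by (simp add: indicator_inter_arith fun_eq_iff)
  have ind_int: "integrable lborel (\<lambda>t. indicator (B i) t * indicator (B j) t :: real)" for i j
    unfolding ii using Bs Bf by (rule integrable_real_indicator)
  have mij: "integral\<^sup>L lborel (\<lambda>t. indicator (B i) t * indicator (B j) t :: real)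
             = pi/4 * euclid_hat (dist (x i) (x j))" for i j
  proof -
    have "integral\<^sup>L lborel (\<lambda>t. indicator (B i) t * indicator (B j) t :: real) = measure lborel (B i \<inter> B j)"
      unfolding ii by simp
    also have "\<dots> = measure lebesgue (B i \<inter> B j)" using Bs by simp
    also have "\<dots> = pi/4 * euclid_hat (dist (x i) (x j))" unfolding B_def by (rule lens_general)
    finally show ?thesis .
  qed
  have h0: "euclid_hat 0 = 1" by (simp add: euclid_hat_def)
  have ind1: "(\<lambda>t. indicator (B i) t :: real) = (\<lambda>t. indicator (B i) t * indicator (B i) t)" for i
    by (simp add: fun_eq_iff indicator_def)
  have ind_int1: "integrable lborel (\<lambda>t. indicator (B i) t :: real)" for i
    by (subst ind1) (rule ind_int)
  have intf: "integrable lborel f"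
    unfolding f_def by (intro Bochner_Integration.integrable_sum integrable_mult_right ind_int1)
  have If: "integral\<^sup>L lborel f = real_of_int (\<Sum>j<n. \<sigma> j) * (pi/4)"
  proof -
    have "integral\<^sup>L lborel f = (\<Sum>i<n. real_of_int (\<sigma> i) * integral\<^sup>L lborel (\<lambda>t. indicator (B i) t :: real))"
      unfolding f_def by (subst Bochner_Integration.integral_sum) (auto intro!: integrable_mult_right ind_int1)
    also have "\<dots> = (\<Sum>i<n. real_of_int (\<sigma> i) * (pi/4))"
    proof (intro sum.cong refl)
      fix i
      have "integral\<^sup>L lborel (\<lambda>t. indicator (B i) t :: real) = pi/4 * euclid_hat (dist (x i) (x i))"
        by (subst ind1) (rule mij)
      then show "real_of_int (\<sigma> i) * integral\<^sup>L lborel (\<lambda>t. indicator (B i) t :: real) = real_of_int (\<sigma> i) * (pi/4)"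
        by (simp add: h0)
    qed
    finally show ?thesis by (simp add: sum_distrib_right)
  qed
  have f2: "f t * f t = (\<Sum>i<n. \<Sum>j<n. real_of_int (\<sigma> i * \<sigma> j) * (indicator (B i) t * indicator (B j) t))" for t
    unfolding f_def sum_product by (intro sum.cong refl) (simp add: algebra_simps)
  have intf2: "integrable lborel (\<lambda>t. f t * f t)"
    unfolding f2 by (intro Bochner_Integration.integrable_sum integrable_mult_right ind_int)
  have If2: "integral\<^sup>L lborel (\<lambda>t. f t * f t) = (\<Sum>i<n. \<Sum>j<n. real_of_int (\<sigma> i * \<sigma> j) * (pi/4 * euclid_hat (dist (x i) (x j))))"
    unfolding f2 by (simp add: Bochner_Integration.integral_sum Bochner_Integration.integrable_sum integrable_mult_right ind_int mij)
  have fi: "f t = real_of_int (\<Sum>i<n. \<sigma> i * (if t \<in> B i then 1 else 0))" for t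
    unfolding f_def of_int_sum of_int_mult by (intro sum.cong refl) (simp add: indicator_def)
  have pw: "\<bar>f t\<bar> \<le> f t * f t" for t
  proof -
    define k where "k = (\<Sum>i<n. \<sigma> i * (if t \<in> B i then 1 else 0))"
    have "real_of_int \<bar>k\<bar> \<le> real_of_int (k * k)" using int_abs_le_sq[of k] by (simp only: of_int_le_iff)
    then show ?thesis unfolding fi k_def[symmetric] by simp
  qed
  have "\<bar>integral\<^sup>L lborel f\<bar> \<le> integral\<^sup>L lborel (\<lambda>t. f t * f t)"
    using intf intf2 pw by (intro integral_abs_bound_integral) auto
  moreover have "integral\<^sup>L lborel (\<lambda>t. f t * f t) = (pi/4) * (\<Sum>i<n. \<Sum>j<n. real_of_int (\<sigma> i * \<sigma> j) * euclid_hat (dist (x i) (x j)))"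
    unfolding If2 sum_distrib_left by (intro sum.cong refl) (simp add: algebra_simps)
  ultimately have "\<bar>real_of_int (\<Sum>j<n. \<sigma> j)\<bar> * (pi/4) \<le> (pi/4) * (\<Sum>i<n. \<Sum>j<n. real_of_int (\<sigma> i * \<sigma> j) * euclid_hat (dist (x i) (x j)))"
    unfolding If by (simp add: abs_mult)
  then show ?thesis using pi_gt_zero by (simp add: mult.commute)
qed

lemma pair_sum:
  fixes a :: "nat \<Rightarrow> nat \<Rightarrow> real"
  assumes sym: "\<And>i j. a i j = a j i"
  shows "(\<Sum>i<n. \<Sum>j<n. a i j) = (\<Sum>i<n. a i i) + 2 * (\<Sum>(i, j) \<in> {(i, j). i < j \<and> j < n}. a i j)"
proof (induction n)
  case 0
  have "{(i, j). i < j \<and> j < (0::nat)} = {}" by auto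
  then show ?case by simp
next
  case (Suc n)
  have P: "{(i, j). i < j \<and> j < Suc n} = {(i, j). i < j \<and> j < n} \<union> (\<lambda>i. (i, n)) ` {..<n}"
    by auto
  have fin: "finite {(i, j). i < j \<and> j < (n::nat)}"
    by (rule finite_subset[of _ "{..<n} \<times> {..<n}"]) auto
  have disj: "{(i, j). i < j \<and> j < n} \<inter> (\<lambda>i. (i, n)) ` {..<n} = {}" by auto
  have "(\<Sum>(i, j) \<in> {(i, j). i < j \<and> j < Suc n}. a i j)
        = (\<Sum>(i, j) \<in> {(i, j). i < j \<and> j < n}. a i j) + (\<Sum>i<n. a i n)"
    unfolding P using fin disj by (subst sum.union_disjoint) (auto simp: sum.reindex inj_on_def)
  moreover have "(\<Sum>i<Suc n. \<Sum>j<Suc n. a i j) = (\<Sum>i<n. \<Sum>j<n. a i j) + (\<Sum>i<n. a i n) + (\<Sum>j<n. a n j) + a n n"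
    by (simp add: sum.distrib)
  moreover have "(\<Sum>j<n. a n j) = (\<Sum>i<n. a i n)" using sym by simp
  ultimately show ?case using Suc.IH by simp
qed



lemma key:
  assumes "spins_ok n \<sigma>"
  shows "(\<Sum>i<n. \<Sum>j<n. real_of_int (\<sigma> i * \<sigma> j) * euclid_hat (dist (x i) (x j)))
         = real n + 2 * U_energy euclid_hat n \<sigma> x"
proof -
  have h0: "euclid_hat 0 = 1" by (simp add: euclid_hat_def)
  have "(\<Sum>i<n. \<Sum>j<n. real_of_int (\<sigma> i * \<sigma> j) * euclid_hat (dist (x i) (x j)))
        = (\<Sum>i<n. real_of_int (\<sigma> i * \<sigma> i) * euclid_hat (dist (x i) (x i)))
          + 2 * (\<Sum>(i, j) \<in> {(i, j). i < j \<and> j < n}. real_of_int (\<sigma> i * \<sigma> j) * euclid_hat (dist (x i) (x j)))"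
    by (rule pair_sum) (simp add: dist_commute mult.commute)
  also have "(\<Sum>i<n. real_of_int (\<sigma> i * \<sigma> i) * euclid_hat (dist (x i) (x i))) = (\<Sum>i<n. 1)"
  proof (intro sum.cong refl)
    fix i assume "i \<in> {..<n}"
    then have "\<sigma> i \<in> {-1, 1}" using assms by (auto simp: spins_ok_def)
    then have "\<sigma> i * \<sigma> i = 1" by auto
    then show "real_of_int (\<sigma> i * \<sigma> i) * euclid_hat (dist (x i) (x i)) = 1" by (simp add: h0)
  qed
  finally show ?thesis by (simp add: U_energy_def)
qed

lemma lower:
  assumes "spins_ok n \<sigma>"
  shows "\<bar>real_of_int (\<Sum>j<n. \<sigma> j)\<bar> \<le> real n + 2 * U_energy euclid_hat n \<sigma> x"
  using pd[of \<sigma> n x] key[OF assms, of x] by simp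

lemma equal_x:
  assumes "spins_ok n \<sigma>" "\<forall>i<n. \<forall>j<n. x i = x j"
  shows "real n + 2 * U_energy euclid_hat n \<sigma> x = (real_of_int (\<Sum>j<n. \<sigma> j))\<^sup>2"
proof -
  have h0: "euclid_hat 0 = 1" by (simp add: euclid_hat_def)
  have "real n + 2 * U_energy euclid_hat n \<sigma> x = (\<Sum>i<n. \<Sum>j<n. real_of_int (\<sigma> i * \<sigma> j) * euclid_hat (dist (x i) (x j)))"
    using key[OF assms(1)] by simp
  also have "\<dots> = (\<Sum>i<n. \<Sum>j<n. real_of_int (\<sigma> i) * real_of_int (\<sigma> j))"
  proof (intro sum.cong refl)
    fix i j assume "i \<in> {..<n}" "j \<in> {..<n}"
    then have "x i = x j" using assms(2) by blast
    then show "real_of_int (\<sigma> i * \<sigma> j) * euclid_hat (dist (x i) (x j)) = real_of_int (\<sigma> i) * real_of_int (\<sigma> j)"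
      by (simp add: h0)
  qed
  also have "\<dots> = (real_of_int (\<Sum>j<n. \<sigma> j))\<^sup>2"
    by (simp add: power2_eq_square sum_product)
  finally show ?thesis .
qed

theorem corollary2p7:
  shows "min_spec_energy euclid_hat = -1/2 \<and> mod_min_spec_energy euclid_hat = -1/2
    \<and> (\<forall>n \<sigma> x. n \<ge> 2 \<and> even n \<and> spins_ok n \<sigma> \<and> (\<Sum>j<n. \<sigma> j) = 0
          \<and> (\<forall>i<n. \<forall>j<n. x i = x j)
          \<longrightarrow> U_energy euclid_hat n \<sigma> x / real n = -1/2)
    \<and> (\<forall>n \<sigma> x. n \<ge> 2 \<and> odd n \<and> spins_ok n \<sigma> \<and> \<bar>\<Sum>j<n. \<sigma> j\<bar> = 1
          \<and> (\<forall>i<n. \<forall>j<n. x i = x j)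
          \<longrightarrow> U_energy euclid_hat n \<sigma> x / (real n - 1) = -1/2)"
proof (intro conjI allI impI)
  define x0 :: "nat \<Rightarrow> real^2" where "x0 = (\<lambda>_. 0)"
  define s2 :: "nat \<Rightarrow> int" where "s2 = (\<lambda>j. if j = 0 then 1 else -1)"
  define s3 :: "nat \<Rightarrow> int" where "s3 = (\<lambda>j. if j = 1 then -1 else 1)"
  have ok2: "spins_ok 2 s2" by (simp add: spins_ok_def s2_def)
  have ok3: "spins_ok 3 s3" by (simp add: spins_ok_def s3_def)
  have sum2: "(\<Sum>j<2. s2 j) = 0" by (simp add: s2_def numeral_2_eq_2)
  have sum3: "(\<Sum>j<3. s3 j) = 1" by (simp add: s3_def eval_nat_numeral)
  have U2: "U_energy euclid_hat 2 s2 x0 = -1"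
    using equal_x[OF ok2, of x0] sum2 by (simp add: x0_def)
  have U3: "U_energy euclid_hat 3 s3 x0 = -1"
    using equal_x[OF ok3, of x0] sum3 by (simp add: x0_def)
  show "min_spec_energy euclid_hat = -1/2"
    unfolding min_spec_energy_def
  proof (rule cInf_eq_minimum)
    show "-1/2 \<in> {U_energy euclid_hat n \<sigma> x / real n | n \<sigma> x. n \<ge> 2 \<and> spins_ok n \<sigma>}"
    proof -
      have "-1/2 = U_energy euclid_hat 2 s2 x0 / real (2::nat)" using U2 by simp
      moreover have "(2::nat) \<ge> 2 \<and> spins_ok 2 s2" using ok2 by simp
      ultimately show ?thesis by blast
    qed
  next
    fix y assume "y \<in> {U_energy euclid_hat n \<sigma> x / real n | n \<sigma> x. n \<ge> 2 \<and> spins_ok n \<sigma>}"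
    then obtain n \<sigma> x where y: "y = U_energy euclid_hat n \<sigma> x / real n" "n \<ge> 2" "spins_ok n \<sigma>" by auto
    have "0 \<le> real n + 2 * U_energy euclid_hat n \<sigma> x" using lower[OF y(3), of x] by linarith
    then have "- real n / 2 \<le> U_energy euclid_hat n \<sigma> x" by linarith
    then have "(- real n / 2) / real n \<le> U_energy euclid_hat n \<sigma> x / real n"
      by (intro divide_right_mono) auto
    then show "-1/2 \<le> y" using y(1,2) by simp
  qed
  show "mod_min_spec_energy euclid_hat = -1/2"
    unfolding mod_min_spec_energy_def
  proof (rule cInf_eq_minimum)
    show "-1/2 \<in> {U_energy euclid_hat n \<sigma> x / (real n - 1) | n \<sigma> x.
       n \<ge> 2 \<and> spins_ok n \<sigma> \<and> (\<Sum>j<n. \<sigma> j) \<noteq> 0}"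
    proof -
      have "-1/2 = U_energy euclid_hat 3 s3 x0 / (real (3::nat) - 1)" using U3 by simp
      moreover have "(3::nat) \<ge> 2 \<and> spins_ok 3 s3 \<and> (\<Sum>j<3. s3 j) \<noteq> 0" using ok3 sum3 by simp
      ultimately show ?thesis by blast
    qed
  next
    fix y assume "y \<in> {U_energy euclid_hat n \<sigma> x / (real n - 1) | n \<sigma> x.
       n \<ge> 2 \<and> spins_ok n \<sigma> \<and> (\<Sum>j<n. \<sigma> j) \<noteq> 0}"
    then obtain n \<sigma> x where y: "y = U_energy euclid_hat n \<sigma> x / (real n - 1)" "n \<ge> 2" "spins_ok n \<sigma>"
      "(\<Sum>j<n. \<sigma> j) \<noteq> 0" by auto
    have "1 \<le> \<bar>(\<Sum>j<n. \<sigma> j)\<bar>" using y(4) by linarith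
    then have "1 \<le> \<bar>real_of_int (\<Sum>j<n. \<sigma> j)\<bar>" by linarith
    then have "1 \<le> real n + 2 * U_energy euclid_hat n \<sigma> x" using lower[OF y(3), of x] by linarith
    then have le: "-1/2 * (real n - 1) \<le> U_energy euclid_hat n \<sigma> x" by (simp add: field_simps)
    have c: "real n - 1 > 0" using y(2) by simp
    show "-1/2 \<le> y" unfolding y(1) by (rule iffD2[OF pos_le_divide_eq[OF c] le])
  qed
next
  fix n \<sigma> and x :: "nat \<Rightarrow> real^2"
  assume a: "2 \<le> n \<and> even n \<and> spins_ok n \<sigma> \<and> (\<Sum>j<n. \<sigma> j) = 0 \<and> (\<forall>i<n. \<forall>j<n. x i = x j)"
  have ok: "spins_ok n \<sigma>" and xe: "\<forall>i<n. \<forall>j<n. x i = x j" and s0: "(\<Sum>j<n. \<sigma> j) = 0"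
    and n2: "2 \<le> n" using a by blast+
  have "real n + 2 * U_energy euclid_hat n \<sigma> x = (real_of_int (\<Sum>j<n. \<sigma> j))\<^sup>2" by (rule equal_x[OF ok xe])
  then have "real n + 2 * U_energy euclid_hat n \<sigma> x = 0" unfolding s0 by simp
  then show "U_energy euclid_hat n \<sigma> x / real n = -1/2" using n2 by (simp add: field_simps)
next
  fix n \<sigma> and x :: "nat \<Rightarrow> real^2"
  assume a: "2 \<le> n \<and> odd n \<and> spins_ok n \<sigma> \<and> \<bar>\<Sum>j<n. \<sigma> j\<bar> = 1 \<and> (\<forall>i<n. \<forall>j<n. x i = x j)"
  have ok: "spins_ok n \<sigma>" and xe: "\<forall>i<n. \<forall>j<n. x i = x j" and s1: "\<bar>\<Sum>j<n. \<sigma> j\<bar> = 1"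
    and n2: "2 \<le> n" using a by blast+
  have "\<bar>real_of_int (\<Sum>j<n. \<sigma> j)\<bar> = 1" using s1 by linarith
  then have sq: "(real_of_int (\<Sum>j<n. \<sigma> j))\<^sup>2 = 1" by (metis abs_power2 power2_abs power_one)
  have "real n + 2 * U_energy euclid_hat n \<sigma> x = (real_of_int (\<Sum>j<n. \<sigma> j))\<^sup>2" by (rule equal_x[OF ok xe])
  then have "real n + 2 * U_energy euclid_hat n \<sigma> x = 1" unfolding sq .
  moreover have "real n - 1 > 0" using n2 by simp
  ultimately show "U_energy euclid_hat n \<sigma> x / (real n - 1) = -1/2" by (simp add: field_simps)
qed

end
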